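(* Let $Q$ be a non-degenerate convex quadrangle of perimeter $2$. Then its dual quadrangle $Q^\circ$ is also convex.
   Context: Identify $\mathbb{R}^2$ with $\mathbb{C}$. A quadrangle $Q=ABCD$ is an ordered 4-tuple of points $A,B,C,D\in\mathbb{C}$: $A$ is the first vertex and the order $A\to B\to C\to D\to A$ is the direction of traversal. Its edge vectors are $z_1=B-A$, $z_2=C-B$, $z_3=D-C$, $z_4=A-D$, so $z_1+z_2+z_3+z_4=0$; its perimeter is $|z_1|+|z_2|+|z_3|+|z_4|$. $Q$ is non-degenerate if each pair of consecutive edge vectors $(z_1,z_2),(z_2,z_3),(z_3,z_4),(z_4,z_1)$ consists of nonzero, non-collinear vectors. A non-degenerate quadrangle is self-intersecting if one of the pairs of opposite edges (segments $AB$ and $CD$, or $BC$ and $DA$) intersect; it is convex if it is not self-intersecting and all its interior angles are less than $\pi$; it is non-convex if it is neither self-intersecting nor convex. Associated plane: for a non-degenerate $Q$ of perimeter $2$, choose $u_1,\dots,u_4\in\mathbb{C}$ with $u_k^2=z_k$, where $u_1$ is an arbitrary square root of $z_1$ and for $k=1,2,3$ the sign of $u_{k+1}$ is chosen so that $\operatorname{Im}(\overline{u_k}u_{k+1})$ has the same sign as $\operatorname{Im}(\overline{z_k}z_{k+1})$. Write $u_k=a_k+i b_k$ and $\bar a=(a_1,a_2,a_3,a_4)$, $\bar b=(b_1,b_2,b_3,b_4)$; these are orthonormal in $\mathbb{R}^4$. Let $\Pi=\operatorname{span}(\bar a,\bar b)$ and $\Pi^\perp$ its orthogonal complement. Dual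 quadrangle: choose an orthonormal basis $(\bar c,\bar d)$ of $\Pi^\perp$, put $w_k=(c_k+i d_k)^2$; then $\sum_k w_k=0$ and $\sum_k|w_k|=2$. The dual quadrangle $Q^\circ=KLMN$ is the quadrangle with $L-K=w_1$, $M-L=w_2$, $N-M=w_3$, $K-N=w_4$. It is determined up to rotation, reflection and translation. *)

theory Defs
  imports "HOL-Analysis.Analysis"
begin

definition cross :: "complex \<Rightarrow> complex \<Rightarrow> real" where
  "cross z w = Im (cnj z * w)"

definition edge :: "complex \<Rightarrow> complex \<Rightarrow> complex \<Rightarrow> complex \<Rightarrow> nat \<Rightarrow> complex" where
  "edge A B C D k =
     (if k = 1 then B - A else if k = 2 then C - B else if k = 3 then D - C else A - D)"

definition nxt :: "nat \<Rightarrow> nat" where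
  "nxt k = (if k = 4 then 1 else k + 1)"

definition perimeter :: "complex \<Rightarrow> complex \<Rightarrow> complex \<Rightarrow> complex \<Rightarrow> real" where
  "perimeter A B C D = (\<Sum>k\<in>{1..4}. cmod (edge A B C D k))"

definition nondegenerate :: "complex \<Rightarrow> complex \<Rightarrow> complex \<Rightarrow> complex \<Rightarrow> bool" where
  "nondegenerate A B C D \<longleftrightarrow>
     (\<forall>k\<in>{1..4}. edge A B C D k \<noteq> 0 \<and> edge A B C D (nxt k) \<noteq> 0 \<and>
                  cross (edge A B C D k) (edge A B C D (nxt k)) \<noteq> 0)"

definition self_intersecting :: "complex \<Rightarrow> complex \<Rightarrow> complex \<Rightarrow> complex \<Rightarrow> bool" where
  "self_intersecting A B C D \<longleftrightarrow> nondegenerate A B C D \<and>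
     (closed_segment A B \<inter> closed_segment C D \<noteq> {} \<or>
      closed_segment B C \<inter> closed_segment D A \<noteq> {})"

text \<open>Signed (shoelace) area; positive iff the traversal is counterclockwise.\<close>
definition signed_area :: "complex \<Rightarrow> complex \<Rightarrow> complex \<Rightarrow> complex \<Rightarrow> real" where
  "signed_area A B C D = (cross A B + cross B C + cross C D + cross D A) / 2"

text \<open>Convex: non-degenerate, not self-intersecting, and every interior angle is less
  than pi, i.e. at every vertex the turn between consecutive edges has the same
  orientation as the (simple) polygon itself.\<close>
definition convex_quad :: "complex \<Rightarrow> complex \<Rightarrow> complex \<Rightarrow> complex \<Rightarrow> bool" where
  "convex_quad A B C D \<longleftrightarrow> nondegenerate A B C D \<and> \<not> self_intersecting A B C D \<and>
     (\<forall>k\<in>{1..4}. sgn (cross (edge A B C D k) (edge A B C D (nxt k)))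
                  = sgn (signed_area A B C D))"

definition assoc_roots :: "complex \<Rightarrow> complex \<Rightarrow> complex \<Rightarrow> complex \<Rightarrow> (nat \<Rightarrow> complex) \<Rightarrow> bool" where
  "assoc_roots A B C D u \<longleftrightarrow>
     (\<forall>k\<in>{1..4}. (u k)\<^sup>2 = edge A B C D k) \<and>
     (\<forall>k\<in>{1..3}. sgn (cross (u k) (u (k + 1))) = sgn (cross (edge A B C D k) (edge A B C D (k + 1))))"

definition dot4 :: "(nat \<Rightarrow> real) \<Rightarrow> (nat \<Rightarrow> real) \<Rightarrow> real" where
  "dot4 x y = (\<Sum>k\<in>{1..4}. x k * y k)"

text \<open>(c, d) is an orthonormal basis of the orthogonal complement of span(a, b), where
  a = Re u, b = Im u (Pi-perp is 2-dimensional since a, b are orthonormal).\<close>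
definition dual_basis :: "(nat \<Rightarrow> complex) \<Rightarrow> (nat \<Rightarrow> real) \<Rightarrow> (nat \<Rightarrow> real) \<Rightarrow> bool" where
  "dual_basis u c d \<longleftrightarrow>
     dot4 c (\<lambda>k. Re (u k)) = 0 \<and> dot4 c (\<lambda>k. Im (u k)) = 0 \<and>
     dot4 d (\<lambda>k. Re (u k)) = 0 \<and> dot4 d (\<lambda>k. Im (u k)) = 0 \<and>
     dot4 c c = 1 \<and> dot4 d d = 1 \<and> dot4 c d = 0"

definition dual_edge :: "(nat \<Rightarrow> real) \<Rightarrow> (nat \<Rightarrow> real) \<Rightarrow> nat \<Rightarrow> complex" where
  "dual_edge c d k = (Complex (c k) (d k))\<^sup>2"

end

theory Submission
  imports Defs
begin

lemma sum_1_4: "(\<Sum>k\<in>{1..4::nat}. f k) = f 1 + f 2 + f 3 + f 4"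
proof -
  have "{1..4::nat} = {1,2,3,4}" by auto
  then show ?thesis by (simp add: add.assoc)
qed

lemma cross_eq: "cross z w = Re z * Im w - Im z * Re w"
  by (simp add: cross_def)

lemma cross_sq: "cross (u\<^sup>2) (v\<^sup>2) = 2 * (Re u * Re v + Im u * Im v) * (Re u * Im v - Im u * Re v)"
  by (simp add: cross_eq power2_eq_square algebra_simps)

lemma sgn_pos: "sgn (x::real) = S \<Longrightarrow> x \<noteq> 0 \<Longrightarrow> S * x > 0"
  by (cases "x > 0") (auto simp: sgn_real_def)

lemma P_pos: "sgn (p::real) = sgn (2*P*p) \<Longrightarrow> 2*P*p \<noteq> 0 \<Longrightarrow> P > 0"
  by (cases "P > 0"; cases "p > 0") (auto simp: sgn_real_def mult_neg_pos mult_pos_neg mult_neg_neg zero_less_mult_iff mult_less_0_iff)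

lemma prod2_im:
  fixes x y :: complex and s :: real
  assumes "Re x > 0" "Re y > 0" "s * Im x > 0" "s * Im y > 0"
  shows "s * Im (x * y) > 0"
proof -
  have "s * Im (x*y) = Re x * (s * Im y) + (s * Im x) * Re y" by (simp add: algebra_simps)
  also have "\<dots> > 0" using assms by (simp add: add_pos_pos)
  finally show ?thesis .
qed

lemma prod2_false:
  fixes x y :: complex and s :: real
  assumes "s * Im x > 0" "s * Im y > 0" "Im (x*y) = 0" "Re (x*y) > 0"
  shows False
proof -
  have s: "s \<noteq> 0" using assms(1) by auto
  have e: "Re x * Im y + Im x * Re y = 0" using assms(3) by simp
  have r: "Re x * Re y - Im x * Im y > 0" using assms(4) by simp
  have "Im x * Im y > 0"
  proof -
    have "(s * Im x) * (s * Im y) > 0" using assms(1,2) by simp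
    then show ?thesis by (simp add: zero_less_mult_iff) (metis mult_less_0_iff not_square_less_zero)
  qed
  then have xy: "Re x * Re y > 0" using r by linarith
  have "Re x * Re y * (Im x * Im y) = - ((Im x * Re y) * (Im x * Re y))"
  proof -
    have "Re x * Im y = - Im x * Re y" using e by linarith
    then have "Re x * Im y * (Im x * Re y) = - Im x * Re y * (Im x * Re y)" by simp
    then show ?thesis by (simp add: algebra_simps)
  qed
  moreover have "Re x * Re y * (Im x * Im y) > 0" using xy \<open>Im x * Im y > 0\<close> by simp
  moreover have "- ((Im x * Re y) * (Im x * Re y)) \<le> 0" by simp
  ultimately show False by linarith
qed

lemma prod4_false:
  fixes w1 w2 w3 w4 :: complex and s r :: real
  assumes "Re w1 > 0" "Re w2 > 0" "Re w3 > 0" "Re w4 > 0"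
    "s * Im w1 > 0" "s * Im w2 > 0" "s * Im w3 > 0" "s * Im w4 > 0"
    "w1 * w2 * w3 * w4 = complex_of_real r" "r > 0"
  shows False
proof -
  have a: "s * Im (w1 * w2) > 0" using prod2_im assms by blast
  have b: "s * Im (w3 * w4) > 0" using prod2_im assms by blast
  have "(w1 * w2) * (w3 * w4) = complex_of_real r" using assms(9) by (simp add: mult.assoc)
  then have "Im ((w1 * w2) * (w3 * w4)) = 0" "Re ((w1 * w2) * (w3 * w4)) > 0" using assms(10) by simp_all
  then show False using prod2_false[OF a b] by blast
qed

lemma seg_disj:
  fixes A B C D :: complex and t :: real
  assumes h1: "t * cross (B - A) (C - B) > 0" and h2: "t * cross (D - C) (A - D) > 0"
  shows "closed_segment A B \<inter> closed_segment C D = {}"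
proof (rule ccontr)
  assume "closed_segment A B \<inter> closed_segment C D \<noteq> {}"
  then obtain x where "x \<in> closed_segment A B" "x \<in> closed_segment C D" by blast
  then obtain u v where u: "0 \<le> u" "u \<le> 1" "x = (1 - u) *\<^sub>R A + u *\<^sub>R B"
    and v: "0 \<le> v" "v \<le> 1" "x = (1 - v) *\<^sub>R C + v *\<^sub>R D"
    unfolding closed_segment_def by blast
  define f where "f = cross (C - A) (x - A)"
  have f1: "t * f = - u * (t * cross (B - A) (C - B))"
    unfolding f_def u(3) by (simp add: cross_eq scaleR_conv_of_real algebra_simps)
  have f2: "t * f = v * (t * cross (D - C) (A - D))"
    unfolding f_def v(3) by (simp add: cross_eq scaleR_conv_of_real algebra_simps)
  have "t * f \<le> 0" unfolding f1 using u(1) h1 by (simp add: mult_nonneg_nonneg)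
  moreover have "t * f \<ge> 0" unfolding f2 using v(1) h2 by (simp add: mult_nonneg_nonneg)
  ultimately have "t * f = 0" by linarith
  then have "u = 0" "v = 0" using f1 f2 h1 h2 by auto
  then have "A = C" using u v by simp
  then have "cross (B - A) (C - B) = 0" by (simp add: cross_eq algebra_simps)
  then show False using h1 by simp
qed

lemma geom:
  fixes A B C D :: complex and t :: real
  assumes h: "\<And>k. k \<in> {1..4} \<Longrightarrow> t * cross (edge A B C D k) (edge A B C D (nxt k)) > 0"
  shows "convex_quad A B C D"
proof -
  have nx: "nxt 1 = 2" "nxt 2 = 3" "nxt 3 = 4" "nxt 4 = 1" by (simp_all add: nxt_def)
  have e: "edge A B C D 1 = B - A" "edge A B C D 2 = C - B" "edge A B C D 3 = D - C" "edge A B C D 4 = A - D"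
    by (simp_all add: edge_def)
  have h1: "t * cross (B - A) (C - B) > 0" using h[of 1] nx e by simp
  have h2: "t * cross (C - B) (D - C) > 0" using h[of 2] nx e by simp
  have h3: "t * cross (D - C) (A - D) > 0" using h[of 3] nx e by simp
  have h4: "t * cross (A - D) (B - A) > 0" using h[of 4] nx e by simp
  have c0: "cross 0 w = 0" "cross w 0 = 0" for w by (simp_all add: cross_eq)
  have nd: "nondegenerate A B C D"
    unfolding nondegenerate_def
  proof
    fix k :: nat assume k: "k \<in> {1..4}"
    have "t * cross (edge A B C D k) (edge A B C D (nxt k)) > 0" using h k .
    then have "cross (edge A B C D k) (edge A B C D (nxt k)) \<noteq> 0" by auto
    then show "edge A B C D k \<noteq> 0 \<and> edge A B C D (nxt k) \<noteq> 0 \<and>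
                  cross (edge A B C D k) (edge A B C D (nxt k)) \<noteq> 0" using c0 by metis
  qed
  have si: "\<not> self_intersecting A B C D"
  proof -
    have "closed_segment A B \<inter> closed_segment C D = {}" using seg_disj[OF h1 h3] .
    moreover have "closed_segment B C \<inter> closed_segment D A = {}" using seg_disj[OF h2 h4] .
    ultimately show ?thesis unfolding self_intersecting_def by blast
  qed
  have area: "signed_area A B C D = (cross (B - A) (C - B) + cross (D - C) (A - D)) / 2"
    unfolding signed_area_def by (simp add: cross_eq algebra_simps)
  have ta: "t * signed_area A B C D > 0" unfolding area using h1 h3 by (simp add: algebra_simps)
  have "sgn (cross (edge A B C D k) (edge A B C D (nxt k))) = sgn (signed_area A B C D)" if k: "k \<in> {1..4}" for k
  proof -
    have p: "t * cross (edge A B C D k) (edge A B C D (nxt k)) > 0" using h k .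
    show ?thesis
    proof (cases "t > 0")
      case True
      then show ?thesis using p ta by (simp add: zero_less_mult_iff)
    next
      case False
      then show ?thesis using p ta by (simp add: zero_less_mult_iff)
    qed
  qed
  then show ?thesis unfolding convex_quad_def using nd si by blast
qed

section \<open>Orthogonal matrices\<close>

definition idx :: "4 \<Rightarrow> nat" where "idx i = (if i = 1 then 1 else if i = 2 then 2 else if i = 3 then 3 else 4)"
definition rowf :: "(nat\<Rightarrow>real) \<Rightarrow> (nat\<Rightarrow>real) \<Rightarrow> (nat\<Rightarrow>real) \<Rightarrow> (nat\<Rightarrow>real) \<Rightarrow> 4 \<Rightarrow> nat \<Rightarrow> real" where
 "rowf a b c d i = (if i = 1 then a else if i = 2 then b else if i = 3 then c else d)"
lemma distinct4: "(1::4) \<noteq> 2" "(1::4) \<noteq> 3" "(1::4) \<noteq> 4" "(2::4) \<noteq> 3" "(2::4) \<noteq> 4" "(3::4) \<noteq> 4"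
  by simp_all
lemma col_orth:
  fixes a b c d :: "nat \<Rightarrow> real"
  defines "dt \<equiv> \<lambda>x y. x 1 * y 1 + x 2 * y 2 + x 3 * y 3 + x 4 * (y 4::real)"
  assumes "dt a a = 1" "dt b b = 1" "dt c c = 1" "dt d d = 1"
    "dt a b = 0" "dt a c = 0" "dt a d = 0" "dt b c = 0" "dt b d = 0" "dt c d = 0"
    and "k \<in> {1..4}" "l \<in> {1..4}"
  shows "a k * a l + b k * b l + c k * c l + d k * d l = (if k = l then 1 else 0)"
proof -
  define M :: "real^4^4" where "M = (\<chi> i j. rowf a b c d i (idx j))"
  have "M ** transpose M = mat 1"
    using assms(2-11) unfolding dt_def
    by (simp add: M_def vec_eq_iff forall_4 matrix_matrix_mult_def sum_4 transpose_def mat_def rowf_def idx_def algebra_simps)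
  then have "orthogonal_matrix (transpose M)" unfolding orthogonal_matrix by simp
  then have "orthogonal_matrix M" by (simp only: orthogonal_matrix_transpose)
  then have "transpose M ** M = mat 1" unfolding orthogonal_matrix .
  then have e: "\<forall>i j. (transpose M ** M) $ i $ j = mat 1 $ i $ j" by (simp only: refl simp_thms)
  then have E: "\<forall>i j. rowf a b c d 1 (idx i) * rowf a b c d 1 (idx j) + rowf a b c d 2 (idx i) * rowf a b c d 2 (idx j)
     + rowf a b c d 3 (idx i) * rowf a b c d 3 (idx j) + rowf a b c d 4 (idx i) * rowf a b c d 4 (idx j) = (if i = j then 1 else 0)"
    by (simp add: M_def matrix_matrix_mult_def sum_4 transpose_def mat_def)
  then have E2: "\<forall>i j. a (idx i) * a (idx j) + b (idx i) * b (idx j) + c (idx i) * c (idx j) + d (idx i) * d (idx j) = (if i = j then 1 else 0)"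
    by (simp add: rowf_def)
  have iv: "idx 1 = 1" "idx 2 = 2" "idx (3::4) = 3" "idx (4::4) = 4" by (simp_all add: idx_def)
  have E3: "a k * a l + b k * b l + c k * c l + d k * d l = (if k = l then 1 else 0)"
    if "k \<in> {1,2,3,4}" "l \<in> {1,2,3,4}" for k l
  proof -
    from that obtain i j where "idx i = k" "idx j = l" using iv by (metis insertE empty_iff)
    moreover have "(i = j) = (idx i = idx j)" using iv distinct4 exhaust_4[of i] exhaust_4[of j] by auto
    ultimately show ?thesis using E2[rule_format, of i j] by simp
  qed
  have "k \<in> {1,2,3,4}" "l \<in> {1,2,3,4}" using assms(12,13) by auto
  then show ?thesis by (rule E3)
qed

definition det4 :: "(nat\<Rightarrow>real) \<Rightarrow> (nat\<Rightarrow>real) \<Rightarrow> (nat\<Rightarrow>real) \<Rightarrow> (nat\<Rightarrow>real) \<Rightarrow> real" where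
 "det4 x y z w = x 1 * y 2 * z 3 * w 4 - x 1 * y 2 * z 4 * w 3 - x 1 * y 3 * z 2 * w 4 + x 1 * y 3 * z 4 * w 2 + x 1 * y 4 * z 2 * w 3 - x 1 * y 4 * z 3 * w 2 - x 2 * y 1 * z 3 * w 4 + x 2 * y 1 * z 4 * w 3 + x 2 * y 3 * z 1 * w 4 - x 2 * y 3 * z 4 * w 1 - x 2 * y 4 * z 1 * w 3 + x 2 * y 4 * z 3 * w 1 + x 3 * y 1 * z 2 * w 4 - x 3 * y 1 * z 4 * w 2 - x 3 * y 2 * z 1 * w 4 + x 3 * y 2 * z 4 * w 1 + x 3 * y 4 * z 1 * w 2 - x 3 * y 4 * z 2 * w 1 - x 4 * y 1 * z 2 * w 3 + x 4 * y 1 * z 3 * w 2 + x 4 * y 2 * z 1 * w 3 - x 4 * y 2 * z 3 * w 1 - x 4 * y 3 * z 1 * w 2 + x 4 * y 3 * z 2 * w 1"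

lemma hodge_gen: "det4 a b (\<lambda>j. a k * a j + b k * b j + c k * c j + d k * d j) (\<lambda>j. a l * a j + b l * b j + c l * c j + d l * d j) = (c k * d l - d k * c l) * det4 a b c d"
  unfolding det4_def by algebra

lemma hodge:
  fixes a b c d :: "nat \<Rightarrow> real"
  assumes co: "\<And>k l. k \<in> {1..4} \<Longrightarrow> l \<in> {1..4} \<Longrightarrow> a k * a l + b k * b l + c k * c l + d k * d l = (if k = l then 1 else 0)"
  shows "a 1 * b 2 - b 1 * a 2 = (c 3 * d 4 - d 3 * c 4) * det4 a b c d"
    "a 3 * b 4 - b 3 * a 4 = (c 1 * d 2 - d 1 * c 2) * det4 a b c d"
    "- (a 4 * b 1 - b 4 * a 1) = (c 2 * d 3 - d 2 * c 3) * det4 a b c d"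
    "- (a 2 * b 3 - b 2 * a 3) = (c 4 * d 1 - d 4 * c 1) * det4 a b c d"
proof -
  have q11: "a 1 * a 1 + b 1 * b 1 + c 1 * c 1 + d 1 * d 1 = 1" using co[of 1 1] by simp
  have q12: "a 1 * a 2 + b 1 * b 2 + c 1 * c 2 + d 1 * d 2 = 0" using co[of 1 2] by simp
  have q13: "a 1 * a 3 + b 1 * b 3 + c 1 * c 3 + d 1 * d 3 = 0" using co[of 1 3] by simp
  have q14: "a 1 * a 4 + b 1 * b 4 + c 1 * c 4 + d 1 * d 4 = 0" using co[of 1 4] by simp
  have q21: "a 2 * a 1 + b 2 * b 1 + c 2 * c 1 + d 2 * d 1 = 0" using co[of 2 1] by simp
  have q22: "a 2 * a 2 + b 2 * b 2 + c 2 * c 2 + d 2 * d 2 = 1" using co[of 2 2] by simp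
  have q23: "a 2 * a 3 + b 2 * b 3 + c 2 * c 3 + d 2 * d 3 = 0" using co[of 2 3] by simp
  have q24: "a 2 * a 4 + b 2 * b 4 + c 2 * c 4 + d 2 * d 4 = 0" using co[of 2 4] by simp
  have q31: "a 3 * a 1 + b 3 * b 1 + c 3 * c 1 + d 3 * d 1 = 0" using co[of 3 1] by simp
  have q32: "a 3 * a 2 + b 3 * b 2 + c 3 * c 2 + d 3 * d 2 = 0" using co[of 3 2] by simp
  have q33: "a 3 * a 3 + b 3 * b 3 + c 3 * c 3 + d 3 * d 3 = 1" using co[of 3 3] by simp
  have q34: "a 3 * a 4 + b 3 * b 4 + c 3 * c 4 + d 3 * d 4 = 0" using co[of 3 4] by simp
  have q41: "a 4 * a 1 + b 4 * b 1 + c 4 * c 1 + d 4 * d 1 = 0" using co[of 4 1] by simp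
  have q42: "a 4 * a 2 + b 4 * b 2 + c 4 * c 2 + d 4 * d 2 = 0" using co[of 4 2] by simp
  have q43: "a 4 * a 3 + b 4 * b 3 + c 4 * c 3 + d 4 * d 3 = 0" using co[of 4 3] by simp
  have q44: "a 4 * a 4 + b 4 * b 4 + c 4 * c 4 + d 4 * d 4 = 1" using co[of 4 4] by simp
  note qs = q11 q12 q13 q14 q21 q22 q23 q24 q31 q32 q33 q34 q41 q42 q43 q44
  show "a 1 * b 2 - b 1 * a 2 = (c 3 * d 4 - d 3 * c 4) * det4 a b c d"
  proof -
    have "det4 a b (\<lambda>j. a 3 * a j + b 3 * b j + c 3 * c j + d 3 * d j) (\<lambda>j. a 4 * a j + b 4 * b j + c 4 * c j + d 4 * d j) = a 1 * b 2 - b 1 * a 2"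
      unfolding det4_def by (simp only: qs) simp
    then show ?thesis using hodge_gen[where a=a and b=b and c=c and d=d and k=3 and l=4] by simp
  qed
  show "a 3 * b 4 - b 3 * a 4 = (c 1 * d 2 - d 1 * c 2) * det4 a b c d"
  proof -
    have "det4 a b (\<lambda>j. a 1 * a j + b 1 * b j + c 1 * c j + d 1 * d j) (\<lambda>j. a 2 * a j + b 2 * b j + c 2 * c j + d 2 * d j) = a 3 * b 4 - b 3 * a 4"
      unfolding det4_def by (simp only: qs) simp
    then show ?thesis using hodge_gen[where a=a and b=b and c=c and d=d and k=1 and l=2] by simp
  qed
  show "- (a 4 * b 1 - b 4 * a 1) = (c 2 * d 3 - d 2 * c 3) * det4 a b c d"
  proof -
    have "det4 a b (\<lambda>j. a 2 * a j + b 2 * b j + c 2 * c j + d 2 * d j) (\<lambda>j. a 3 * a j + b 3 * b j + c 3 * c j + d 3 * d j) = - (a 4 * b 1 - b 4 * a 1)"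
      unfolding det4_def by (simp only: qs) simp
    then show ?thesis using hodge_gen[where a=a and b=b and c=c and d=d and k=2 and l=3] by simp
  qed
  show "- (a 2 * b 3 - b 2 * a 3) = (c 4 * d 1 - d 4 * c 1) * det4 a b c d"
  proof -
    have "det4 a b (\<lambda>j. a 4 * a j + b 4 * b j + c 4 * c j + d 4 * d j) (\<lambda>j. a 1 * a j + b 1 * b j + c 1 * c j + d 1 * d j) = - (a 2 * b 3 - b 2 * a 3)"
      unfolding det4_def by (simp only: qs) simp
    then show ?thesis using hodge_gen[where a=a and b=b and c=c and d=d and k=4 and l=1] by simp
  qed
qed


lemma cmod_sq: "cmod (u\<^sup>2) = Re u * Re u + Im u * Im u"
  by (simp only: norm_power cmod_power2) (simp add: power2_eq_square)

theorem corollary5p1: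
  fixes A B C D K :: complex and u :: "nat \<Rightarrow> complex" and c d :: "nat \<Rightarrow> real"
  assumes "convex_quad A B C D"
    and "perimeter A B C D = 2"
    and "assoc_roots A B C D u"
    and "dual_basis u c d"
  shows "convex_quad K (K + dual_edge c d 1) (K + dual_edge c d 1 + dual_edge c d 2)
           (K + dual_edge c d 1 + dual_edge c d 2 + dual_edge c d 3)"
proof -
  define z where "z = edge A B C D"
  define a where "a = (\<lambda>k. Re (u k))"
  define b where "b = (\<lambda>k. Im (u k))"
  define S where "S = sgn (signed_area A B C D)"
  define P where "P = (\<lambda>k l. a k * a l + b k * b l)"
  define p where "p = (\<lambda>k l. a k * b l - b k * a l)"
  have nx: "nxt 1 = 2" "nxt 2 = 3" "nxt 3 = 4" "nxt 4 = 1" by (simp_all add: nxt_def)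
  have nd: "nondegenerate A B C D" and
    sg: "\<And>k. k \<in> {1..4} \<Longrightarrow> sgn (cross (z k) (z (nxt k))) = S"
    using assms(1) unfolding convex_quad_def z_def S_def by auto
  have nz: "\<And>k. k \<in> {1..4} \<Longrightarrow> cross (z k) (z (nxt k)) \<noteq> 0 \<and> z k \<noteq> 0"
    using nd unfolding nondegenerate_def z_def by auto
  have uz: "\<And>k. k \<in> {1..4} \<Longrightarrow> (u k)\<^sup>2 = z k"
    and us: "\<And>k. k \<in> {1..3} \<Longrightarrow> sgn (cross (u k) (u (k + 1))) = sgn (cross (z k) (z (k + 1)))"
    using assms(3) unfolding assoc_roots_def z_def by auto
  have zc: "cross (z k) (z l) = 2 * P k l * p k l" if "k \<in> {1..4}" "l \<in> {1..4}" for k l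
    using uz[OF that(1)] uz[OF that(2)] cross_sq[of "u k" "u l"] by (simp add: P_def p_def a_def b_def)
  have uc: "cross (u k) (u l) = p k l" for k l by (simp add: cross_eq p_def a_def b_def)
  have SZ: "S * (2 * P k (nxt k) * p k (nxt k)) > 0" if "k \<in> {1..4}" for k
  proof -
    have "nxt k \<in> {1..4}" using that by (auto simp: nxt_def)
    then show ?thesis using sgn_pos[OF sg[OF that] conjunct1[OF nz[OF that]]] zc that by simp
  qed
  have SZ1: "S * (2 * P 1 2 * p 1 2) > 0" using SZ[of 1] nx by simp
  have SZ2: "S * (2 * P 2 3 * p 2 3) > 0" using SZ[of 2] nx by simp
  have SZ3: "S * (2 * P 3 4 * p 3 4) > 0" using SZ[of 3] nx by simp
  have SZ4: "S * (2 * P 4 1 * p 4 1) > 0" using SZ[of 4] nx by simp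
  have Ppos: "P k (k+1) > 0" "S * p k (k+1) > 0" if "k \<in> {1..3}" for k
  proof -
    have k4: "k \<in> {1..4}" "k + 1 \<in> {1..4}" using that by auto
    have nk: "nxt k = k + 1" using that by (auto simp: nxt_def)
    have ne: "2 * P k (k+1) * p k (k+1) \<noteq> 0" using nz[OF k4(1)] zc[OF k4] nk by simp
    have "sgn (p k (k+1)) = sgn (2 * P k (k+1) * p k (k+1))"
      using us[OF that] uc zc[OF k4] by simp
    then show "P k (k+1) > 0" using P_pos ne by blast
    have "sgn (p k (k+1)) = S" using us[OF that] uc sg[OF k4(1)] nk by simp
    then show "S * p k (k+1) > 0" using sgn_pos ne by auto
  qed
  have ee: "(1::nat)+1 = 2" "(2::nat)+1 = 3" "(3::nat)+1=4" by simp_all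
  have P12: "P 1 2 > 0" "S * p 1 2 > 0" using Ppos[of 1, unfolded ee] by simp_all
  have P23: "P 2 3 > 0" "S * p 2 3 > 0" using Ppos[of 2, unfolded ee] by simp_all
  have P34: "P 3 4 > 0" "S * p 3 4 > 0" using Ppos[of 3, unfolded ee] by simp_all
  have unz: "u k \<noteq> 0" if "k \<in> {1..4}" for k using nz[OF that] uz[OF that] by auto
  have P41: "P 4 1 < 0"
  proof (rule ccontr)
    assume "\<not> P 4 1 < 0"
    moreover have "P 4 1 \<noteq> 0" using SZ4 by auto
    ultimately have Pp: "P 4 1 > 0" by linarith
    have Sp: "S * p 4 1 > 0"
    proof -
      have "(S * p 4 1) * (2 * P 4 1) > 0" using SZ4 by (simp add: algebra_simps)
      then show ?thesis using Pp by (simp add: zero_less_mult_iff)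
    qed
    define w where "w = (\<lambda>k l. cnj (u k) * u l)"
    have wre: "Re (w k l) = P k l" "Im (w k l) = p k l" for k l by (simp_all add: w_def P_def p_def a_def b_def)
    define r where "r = (a 1 * a 1 + b 1 * b 1) * (a 2 * a 2 + b 2 * b 2) * (a 3 * a 3 + b 3 * b 3) * (a 4 * a 4 + b 4 * b 4)"
    have rp: "a k * a k + b k * b k > 0" if "k \<in> {1..4}" for k
    proof -
      have "a k \<noteq> 0 \<or> b k \<noteq> 0" using unz[OF that] by (auto simp: a_def b_def complex_eq_iff)
      then show ?thesis by (simp add: sum_squares_gt_zero_iff)
    qed
    have "r > 0" unfolding r_def using rp[of 1] rp[of 2] rp[of 3] rp[of 4] by simp
    have cu: "cnj (u k) * u k = complex_of_real (a k * a k + b k * b k)" for k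
      by (simp add: complex_eq_iff a_def b_def)
    have "w 1 2 * w 2 3 * w 3 4 * w 4 1 = (cnj (u 1) * u 1) * (cnj (u 2) * u 2) * (cnj (u 3) * u 3) * (cnj (u 4) * u 4)"
      unfolding w_def by (simp add: ac_simps)
    also have "\<dots> = complex_of_real r" unfolding cu r_def by simp
    finally have prod: "w 1 2 * w 2 3 * w 3 4 * w 4 1 = complex_of_real r" .
    show False
      using prod4_false[of "w 1 2" "w 2 3" "w 3 4" "w 4 1" S r] prod \<open>r > 0\<close> P12 P23 P34 Pp Sp wre by simp
  qed
  have Sp41: "S * p 4 1 < 0"
  proof -
    have "(S * p 4 1) * (2 * P 4 1) > 0" using SZ4 by (simp add: algebra_simps)
    then show ?thesis using P41 by (simp add: zero_less_mult_iff)
  qed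
  have esum: "z 1 + z 2 + z 3 + z 4 = 0" by (simp add: z_def edge_def)
  have usum: "(u 1)\<^sup>2 + (u 2)\<^sup>2 + (u 3)\<^sup>2 + (u 4)\<^sup>2 = 0" using esum uz[of 1] uz[of 2] uz[of 3] uz[of 4] by simp
  have re_sq: "Re (v\<^sup>2) = Re v * Re v - Im v * Im v" "Im (v\<^sup>2) = 2 * Re v * Im v" for v :: complex
    by (simp_all add: power2_eq_square)
  have s1: "(a 1 * a 1 - b 1 * b 1) + (a 2 * a 2 - b 2 * b 2) + (a 3 * a 3 - b 3 * b 3) + (a 4 * a 4 - b 4 * b 4) = 0"
    using arg_cong[OF usum, of Re] by (simp add: re_sq a_def b_def)
  have s2: "2 * a 1 * b 1 + 2 * a 2 * b 2 + 2 * a 3 * b 3 + 2 * a 4 * b 4 = 0"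
    using arg_cong[OF usum, of Im] by (simp add: re_sq a_def b_def)
  have s3: "(a 1 * a 1 + b 1 * b 1) + (a 2 * a 2 + b 2 * b 2) + (a 3 * a 3 + b 3 * b 3) + (a 4 * a 4 + b 4 * b 4) = 2"
  proof -
    have "cmod (z k) = a k * a k + b k * b k" if "k \<in> {1..4}" for k
      using uz[OF that] cmod_sq[of "u k"] by (simp add: a_def b_def)
    then show ?thesis using assms(2) unfolding perimeter_def sum_1_4 z_def by simp
  qed
  have oa: "a 1 * a 1 + a 2 * a 2 + a 3 * a 3 + a 4 * a 4 = 1" using s1 s3 by linarith
  have ob: "b 1 * b 1 + b 2 * b 2 + b 3 * b 3 + b 4 * b 4 = 1" using s1 s3 by linarith
  have oab: "a 1 * b 1 + a 2 * b 2 + a 3 * b 3 + a 4 * b 4 = 0" using s2 by linarith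
  have db: "c 1 * a 1 + c 2 * a 2 + c 3 * a 3 + c 4 * a 4 = 0" "c 1 * b 1 + c 2 * b 2 + c 3 * b 3 + c 4 * b 4 = 0"
     "d 1 * a 1 + d 2 * a 2 + d 3 * a 3 + d 4 * a 4 = 0" "d 1 * b 1 + d 2 * b 2 + d 3 * b 3 + d 4 * b 4 = 0"
     "c 1 * c 1 + c 2 * c 2 + c 3 * c 3 + c 4 * c 4 = 1" "d 1 * d 1 + d 2 * d 2 + d 3 * d 3 + d 4 * d 4 = 1"
     "c 1 * d 1 + c 2 * d 2 + c 3 * d 3 + c 4 * d 4 = 0"
    using assms(4) unfolding dual_basis_def dot4_def sum_1_4 a_def b_def by auto
  have co: "a k * a l + b k * b l + c k * c l + d k * d l = (if k = l then 1 else 0)"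
    if "k \<in> {1..4}" "l \<in> {1..4}" for k l
    using col_orth[of a b c d k l] oa ob oab db that by (simp add: algebra_simps)
  have hd: "a 1 * b 2 - b 1 * a 2 = (c 3 * d 4 - d 3 * c 4) * det4 a b c d"
    "a 3 * b 4 - b 3 * a 4 = (c 1 * d 2 - d 1 * c 2) * det4 a b c d"
    "- (a 4 * b 1 - b 4 * a 1) = (c 2 * d 3 - d 2 * c 3) * det4 a b c d"
    "- (a 2 * b 3 - b 2 * a 3) = (c 4 * d 1 - d 4 * c 1) * det4 a b c d"
    using hodge[of a b c d] co by blast+
  define \<sigma> where "\<sigma> = det4 a b c d"
  define Q where "Q = (\<lambda>k l. c k * c l + d k * d l)"
  define q where "q = (\<lambda>k l. c k * d l - d k * c l)"
  have Qe: "Q k l = - P k l" if "k \<in> {1..4}" "l \<in> {1..4}" "k \<noteq> l" for k l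
    using co[OF that(1,2)] that(3) by (simp add: Q_def P_def algebra_simps)
  have hq: "p 1 2 = q 3 4 * \<sigma>" "p 3 4 = q 1 2 * \<sigma>" "- p 4 1 = q 2 3 * \<sigma>" "- p 2 3 = q 4 1 * \<sigma>"
    using hd unfolding p_def q_def \<sigma>_def by simp_all
  define w where "w = dual_edge c d"
  have wc: "cross (w k) (w l) = 2 * Q k l * q k l" for k l
    using cross_sq[of "Complex (c k) (d k)" "Complex (c l) (d l)"] by (simp add: w_def dual_edge_def Q_def q_def)
  have wsum: "w 1 + w 2 + w 3 + w 4 = 0"
  proof -
    have r: "Re (w k) = c k * c k - d k * d k" "Im (w k) = 2 * c k * d k" for k
      by (simp_all add: w_def dual_edge_def power2_eq_square)
    have "Re (w 1 + w 2 + w 3 + w 4) = 0" unfolding plus_complex.sel r using db(5,6) by linarith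
    moreover have "Im (w 1 + w 2 + w 3 + w 4) = 0" unfolding plus_complex.sel r using db(7) by linarith
    ultimately show ?thesis by (simp add: complex_eq_iff)
  qed
  define K1 where "K1 = K + w 1"
  define K2 where "K2 = K + w 1 + w 2"
  define K3 where "K3 = K + w 1 + w 2 + w 3"
  have de: "edge K K1 K2 K3 k = w k" if "k \<in> {1..4}" for k
  proof -
    have "k = 1 \<or> k = 2 \<or> k = 3 \<or> k = 4" using that by auto
    moreover have "K - K3 = w 4"
    proof -
      have "Re (w 1 + w 2 + w 3 + w 4) = 0" "Im (w 1 + w 2 + w 3 + w 4) = 0" using wsum by simp_all
      then show ?thesis unfolding K3_def by (simp add: complex_eq_iff)
    qed
    ultimately show ?thesis unfolding edge_def K1_def K2_def K3_def by auto
  qed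
  define t where "t = - S * \<sigma>"
  have T1: "t * cross (w 1) (w 2) > 0"
  proof -
    have "t * cross (w 1) (w 2) = 2 * P 1 2 * (S * (q 1 2 * \<sigma>))"
      unfolding wc t_def using Qe[of 1 2] by (simp add: algebra_simps)
    also have "\<dots> = 2 * P 1 2 * (S * p 3 4)" using hq by simp
    finally show ?thesis using P12 P34 by simp
  qed
  have T2: "t * cross (w 2) (w 3) > 0"
  proof -
    have "t * cross (w 2) (w 3) = 2 * P 2 3 * (S * (q 2 3 * \<sigma>))"
      unfolding wc t_def using Qe[of 2 3] by (simp add: algebra_simps)
    also have "\<dots> = 2 * P 2 3 * (- (S * p 4 1))" by (simp only: hq(3)[symmetric])
    finally have e: "t * cross (w 2) (w 3) = 2 * P 2 3 * (- (S * p 4 1))" .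
    have "2 * P 2 3 * (- (S * p 4 1)) > 0" using P23 Sp41 by (intro mult_pos_pos) simp_all
    then show ?thesis using e by simp
  qed
  have T3: "t * cross (w 3) (w 4) > 0"
  proof -
    have "t * cross (w 3) (w 4) = 2 * P 3 4 * (S * (q 3 4 * \<sigma>))"
      unfolding wc t_def using Qe[of 3 4] by (simp add: algebra_simps)
    also have "\<dots> = 2 * P 3 4 * (S * p 1 2)" using hq by simp
    finally show ?thesis using P34 P12 by simp
  qed
  have T4: "t * cross (w 4) (w 1) > 0"
  proof -
    have "t * cross (w 4) (w 1) = 2 * P 4 1 * (S * (q 4 1 * \<sigma>))"
      unfolding wc t_def using Qe[of 4 1] by (simp add: algebra_simps)
    also have "\<dots> = 2 * P 4 1 * (- (S * p 2 3))" by (simp only: hq(4)[symmetric])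
    finally have e: "t * cross (w 4) (w 1) = 2 * P 4 1 * (- (S * p 2 3))" .
    have "(2 * P 4 1) * (- (S * p 2 3)) > 0" using P41 P23 by (intro mult_neg_neg) simp_all
    then show ?thesis using e by simp
  qed
  have "convex_quad K K1 K2 K3"
  proof (rule geom[where t=t])
    fix k :: nat assume k: "k \<in> {1..4}"
    have "nxt k \<in> {1..4}" using k by (auto simp: nxt_def)
    then have "t * cross (edge K K1 K2 K3 k) (edge K K1 K2 K3 (nxt k)) = t * cross (w k) (w (nxt k))"
      using de k by simp
    moreover have "k = 1 \<or> k = 2 \<or> k = 3 \<or> k = 4" using k by auto
    ultimately show "t * cross (edge K K1 K2 K3 k) (edge K K1 K2 K3 (nxt k)) > 0"
      using T1 T2 T3 T4 nx by auto
  qed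
  then show ?thesis unfolding K1_def K2_def K3_def w_def .
qed

end
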